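(* Let $(M,g)$ be a Riemannian manifold of dimension $n\ge 3$ and let $(M,g,\xi,\gamma)$ be a Ricci soliton, i.e. $\frac12\mathcal{L}_\xi g+\mathrm{Ric}=\gamma g$ with $\gamma$ a real constant, whose potential vector field $\xi$ has constant length. If the dual $1$-form $\xi^\flat$ of $\xi$ is a harmonic form, i.e. $\Delta(\xi^\flat)=0$, then the Ricci soliton is steady, i.e. $\gamma=0$.
   Context: $\xi^\flat=g(\xi,\cdot)$. $\Delta$ is the operator on $1$-forms which the paper calls the Laplace–Hodge operator, with convention fixed by the identity $\mathrm{div}(\mathcal{L}_Xg)=(\Delta+\mathrm{Ric}_\sharp)(X^\flat)+d(\mathrm{div}X)$ for every vector field $X$, where $\mathrm{Ric}_\sharp(\theta)(X)=\mathrm{Ric}(\theta^\sharp,X)$ and $(\mathrm{div}T)(X)=\sum_i(\nabla_{E_i}T)(E_i,X)$ for a symmetric $(0,2)$-tensor $T$. A $1$-form $\theta$ is harmonic if $\Delta\theta=0$. *)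

theory Defs
  imports "HOL-Analysis.Analysis"
begin

text \<open>Local coordinate Riemannian geometry on an open set U of the Euclidean
space real^'n (a single chart).  Tensors are given by their components.\<close>

definition pd :: "'n::finite \<Rightarrow> (real^'n \<Rightarrow> real) \<Rightarrow> real^'n \<Rightarrow> real" where
  "pd i f x = deriv (\<lambda>t. f (x + t *\<^sub>R axis i 1)) 0"

fun pds :: "'n::finite list \<Rightarrow> (real^'n \<Rightarrow> real) \<Rightarrow> real^'n \<Rightarrow> real" where
  "pds [] f = f"
| "pds (i # is) f = pd i (pds is f)"

definition smooth_on :: "(real^'n::finite) set \<Rightarrow> (real^'n \<Rightarrow> real) \<Rightarrow> bool" where
  "smooth_on U f \<longleftrightarrow> (\<forall>ds. pds ds f differentiable_on U)"

definition riemannian_metric ::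
  "(real^'n::finite) set \<Rightarrow> (real^'n \<Rightarrow> 'n \<Rightarrow> 'n \<Rightarrow> real) \<Rightarrow> bool" where
  "riemannian_metric U g \<longleftrightarrow> open U \<and>
     (\<forall>i j. smooth_on U (\<lambda>x. g x i j)) \<and>
     (\<forall>x\<in>U. \<forall>i j. g x i j = g x j i) \<and>
     (\<forall>x\<in>U. \<forall>v::real^'n. v \<noteq> 0 \<longrightarrow> (\<Sum>i\<in>UNIV. \<Sum>j\<in>UNIV. v$i * g x i j * v$j) > 0)"

definition ginv :: "(real^'n::finite \<Rightarrow> 'n \<Rightarrow> 'n \<Rightarrow> real) \<Rightarrow> real^'n \<Rightarrow> 'n \<Rightarrow> 'n \<Rightarrow> real" where
  "ginv g x i j = matrix_inv (\<chi> a b. g x a b) $ i $ j"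

definition christoffel :: "(real^'n::finite \<Rightarrow> 'n \<Rightarrow> 'n \<Rightarrow> real) \<Rightarrow> real^'n \<Rightarrow> 'n \<Rightarrow> 'n \<Rightarrow> 'n \<Rightarrow> real" where
  "christoffel g x k i j = 1/2 * (\<Sum>l\<in>UNIV. ginv g x k l *
      (pd i (\<lambda>y. g y j l) x + pd j (\<lambda>y. g y i l) x - pd l (\<lambda>y. g y i j) x))"

definition ricci :: "(real^'n::finite \<Rightarrow> 'n \<Rightarrow> 'n \<Rightarrow> real) \<Rightarrow> real^'n \<Rightarrow> 'n \<Rightarrow> 'n \<Rightarrow> real" where
  "ricci g x i j = (\<Sum>k\<in>UNIV. pd k (\<lambda>y. christoffel g y k i j) x
      - pd j (\<lambda>y. christoffel g y k i k) x
      + (\<Sum>l\<in>UNIV. christoffel g x k k l * christoffel g x l i j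
                   - christoffel g x k j l * christoffel g x l i k))"

definition lie_metric :: "(real^'n::finite \<Rightarrow> 'n \<Rightarrow> 'n \<Rightarrow> real) \<Rightarrow> (real^'n \<Rightarrow> 'n \<Rightarrow> real)
     \<Rightarrow> real^'n \<Rightarrow> 'n \<Rightarrow> 'n \<Rightarrow> real" where
  "lie_metric g \<xi> x i j = (\<Sum>k\<in>UNIV. \<xi> x k * pd k (\<lambda>y. g y i j) x
      + g x k j * pd i (\<lambda>y. \<xi> y k) x + g x i k * pd j (\<lambda>y. \<xi> y k) x)"

definition flat :: "(real^'n::finite \<Rightarrow> 'n \<Rightarrow> 'n \<Rightarrow> real) \<Rightarrow> (real^'n \<Rightarrow> 'n \<Rightarrow> real)
     \<Rightarrow> real^'n \<Rightarrow> 'n \<Rightarrow> real" where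
  "flat g \<xi> x j = (\<Sum>k\<in>UNIV. g x j k * \<xi> x k)"

definition cov1 :: "(real^'n::finite \<Rightarrow> 'n \<Rightarrow> 'n \<Rightarrow> real) \<Rightarrow> (real^'n \<Rightarrow> 'n \<Rightarrow> real)
     \<Rightarrow> real^'n \<Rightarrow> 'n \<Rightarrow> 'n \<Rightarrow> real" where
  "cov1 g \<theta> x i j = pd i (\<lambda>y. \<theta> y j) x - (\<Sum>k\<in>UNIV. christoffel g x k i j * \<theta> x k)"

definition cov2 :: "(real^'n::finite \<Rightarrow> 'n \<Rightarrow> 'n \<Rightarrow> real) \<Rightarrow> (real^'n \<Rightarrow> 'n \<Rightarrow> real)
     \<Rightarrow> real^'n \<Rightarrow> 'n \<Rightarrow> 'n \<Rightarrow> 'n \<Rightarrow> real" where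
  "cov2 g \<theta> x i k j = pd i (\<lambda>y. cov1 g \<theta> y k j) x
      - (\<Sum>l\<in>UNIV. christoffel g x l i k * cov1 g \<theta> x l j
                   + christoffel g x l i j * cov1 g \<theta> x k l)"

text \<open>The Laplace operator on 1-forms with the convention of the paper,
  div(L_X g) = (Delta + Ric)(X^flat) + d(div X), i.e. Delta theta_j = g^{ik} nabla_i nabla_k theta_j.\<close>
definition laplace :: "(real^'n::finite \<Rightarrow> 'n \<Rightarrow> 'n \<Rightarrow> real) \<Rightarrow> (real^'n \<Rightarrow> 'n \<Rightarrow> real)
     \<Rightarrow> real^'n \<Rightarrow> 'n \<Rightarrow> real" where
  "laplace g \<theta> x j = (\<Sum>i\<in>UNIV. \<Sum>k\<in>UNIV. ginv g x i k * cov2 g \<theta> x i k j)"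

definition ricci_soliton :: "(real^'n::finite) set \<Rightarrow> (real^'n \<Rightarrow> 'n \<Rightarrow> 'n \<Rightarrow> real)
     \<Rightarrow> (real^'n \<Rightarrow> 'n \<Rightarrow> real) \<Rightarrow> real \<Rightarrow> bool" where
  "ricci_soliton U g \<xi> \<gamma> \<longleftrightarrow> riemannian_metric U g \<and>
     (\<forall>k. smooth_on U (\<lambda>x. \<xi> x k)) \<and>
     (\<forall>x\<in>U. \<forall>i j. 1/2 * lie_metric g \<xi> x i j + ricci g x i j = \<gamma> * g x i j)"

end

theory Submission
  imports Defs
begin

definition has_pd :: "'n::finite \<Rightarrow> (real^'n \<Rightarrow> real) \<Rightarrow> real^'n \<Rightarrow> real \<Rightarrow> bool" where
  "has_pd i f x D \<longleftrightarrow> ((\<lambda>t. f (x + t *\<^sub>R axis i 1)) has_real_derivative D) (at 0)"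

lemma has_pd_pd: "has_pd i f x D \<Longrightarrow> pd i f x = D"
  unfolding has_pd_def pd_def by (rule DERIV_imp_deriv)

lemma has_pd_add: "has_pd i f x A \<Longrightarrow> has_pd i h x B \<Longrightarrow> has_pd i (\<lambda>y. f y + h y) x (A + B)"
  unfolding has_pd_def by (rule DERIV_add)

lemma has_pd_diff: "has_pd i f x A \<Longrightarrow> has_pd i h x B \<Longrightarrow> has_pd i (\<lambda>y. f y - h y) x (A - B)"
  unfolding has_pd_def by (rule DERIV_diff)

lemma has_pd_mult: "has_pd i f x A \<Longrightarrow> has_pd i h x B \<Longrightarrow> has_pd i (\<lambda>y. f y * h y) x (A * h x + f x * B)"
  unfolding has_pd_def by (drule (1) DERIV_mult) (simp add: mult.commute)

lemma has_pd_minus: "has_pd i f x A \<Longrightarrow> has_pd i (\<lambda>y. - f y) x (- A)"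
  unfolding has_pd_def by (rule DERIV_minus)

lemma has_pd_const: "has_pd i (\<lambda>y. c) x 0"
  unfolding has_pd_def by simp

lemma has_pd_cmult: "has_pd i f x A \<Longrightarrow> has_pd i (\<lambda>y. c * f y) x (c * A)"
  unfolding has_pd_def by (rule DERIV_cmult)

lemma has_pd_sum: "finite S \<Longrightarrow> (\<And>a. a \<in> S \<Longrightarrow> has_pd i (f a) x (A a)) \<Longrightarrow>
   has_pd i (\<lambda>y. \<Sum>a\<in>S. f a y) x (\<Sum>a\<in>S. A a)"
proof (induct S rule: finite_induct)
  case empty
  then show ?case by (simp add: has_pd_const)
next
  case (insert a S)
  then show ?case by (simp add: has_pd_add)
qed

lemma has_pd_sum_UNIV: "(\<And>a. has_pd i (f a) x (A a)) \<Longrightarrow>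
   has_pd i (\<lambda>y. \<Sum>a\<in>(UNIV::'m::finite set). f a y) x (\<Sum>a\<in>UNIV. A a)"
  by (rule has_pd_sum) auto

lemma line_open:
  fixes U :: "(real^'n::finite) set"
  assumes "open U"
  shows "open ((\<lambda>t::real. x + t *\<^sub>R a) -` U)"
  by (rule continuous_open_vimage[OF assms]) (intro continuous_intros)

lemma has_pd_transform:
  assumes "has_pd i h x D" "open U" "x \<in> U" "\<And>y. y \<in> U \<Longrightarrow> f y = h y"
  shows "has_pd i f x D"
proof -
  let ?S = "(\<lambda>t::real. x + t *\<^sub>R axis i 1) -` U"
  have o: "open ?S" using line_open[OF assms(2)] .
  have z: "0 \<in> ?S" using assms(3) by simp
  have e: "\<And>t. t \<in> ?S \<Longrightarrow> h (x + t *\<^sub>R axis i 1) = f (x + t *\<^sub>R axis i 1)"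
    using assms(4) by simp
  show ?thesis using has_field_derivative_transform_within_open[OF assms(1)[unfolded has_pd_def] o z e]
    unfolding has_pd_def .
qed

lemma pd_transform:
  assumes "open U" "x \<in> U" "\<And>y. y \<in> U \<Longrightarrow> f y = h y"
  shows "pd i f x = pd i h x"
proof -
  let ?S = "(\<lambda>t::real. x + t *\<^sub>R axis i 1) -` U"
  have o: "open ?S" using line_open[OF assms(1)] .
  have z: "0 \<in> ?S" using assms(2) by simp
  have "eventually (\<lambda>t. t \<in> ?S) (nhds 0)" by (rule eventually_nhds_in_open[OF o z])
  then have "eventually (\<lambda>t. f (x + t *\<^sub>R axis i 1) = h (x + t *\<^sub>R axis i 1)) (nhds 0)"
    by eventually_elim (simp add: assms(3))
  then show ?thesis unfolding pd_def by (intro deriv_cong_ev) auto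
qed

lemma differentiable_has_pd:
  assumes "f differentiable (at x)"
  shows "has_pd i f x (pd i f x)"
proof -
  obtain f' where f': "(f has_derivative f') (at x)" using assms unfolding differentiable_def by blast
  have l: "((\<lambda>t::real. x + t *\<^sub>R axis i 1) has_derivative (\<lambda>t. t *\<^sub>R axis i 1)) (at 0)"
    by (auto intro!: derivative_eq_intros)
  have "((f \<circ> (\<lambda>t::real. x + t *\<^sub>R axis i 1)) has_derivative (f' \<circ> (\<lambda>t. t *\<^sub>R axis i 1))) (at 0)"
    by (rule diff_chain_at[OF l]) (simp add: f')
  moreover have e: "(*) (f' (axis i 1)) = (f' \<circ> (\<lambda>t. t *\<^sub>R axis i 1))"
    using has_derivative_linear[OF f'] by (auto simp: linear_scale mult.commute)
  ultimately have "has_pd i f x (f' (axis i 1))"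
    unfolding has_pd_def has_field_derivative_def e by (simp add: comp_def)
  then show ?thesis using has_pd_pd by metis
qed

lemma differentiable_prod_fin:
  fixes f :: "'i \<Rightarrow> 'a::real_normed_vector \<Rightarrow> real"
  assumes "\<And>i. i \<in> I \<Longrightarrow> f i differentiable (at x)"
  shows "(\<lambda>x. \<Prod>i\<in>I. f i x) differentiable (at x)"
proof -
  obtain f' where "\<And>i. i \<in> I \<Longrightarrow> (f i has_derivative f' i) (at x)"
    using assms unfolding differentiable_def by metis
  then show ?thesis unfolding differentiable_def by (blast intro: has_derivative_prod)
qed

lemma has_derivative_pd:
  assumes "(f has_derivative f') (at x)"
  shows "pd i f x = f' (axis i 1)"
proof -
  have l: "((\<lambda>t::real. x + t *\<^sub>R axis i 1) has_derivative (\<lambda>t. t *\<^sub>R axis i 1)) (at 0)"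
    by (auto intro!: derivative_eq_intros)
  have "((f \<circ> (\<lambda>t::real. x + t *\<^sub>R axis i 1)) has_derivative (f' \<circ> (\<lambda>t. t *\<^sub>R axis i 1))) (at 0)"
    by (rule diff_chain_at[OF l]) (simp add: assms)
  moreover have e: "(*) (f' (axis i 1)) = (f' \<circ> (\<lambda>t. t *\<^sub>R axis i 1))"
    using has_derivative_linear[OF assms] by (auto simp: linear_scale mult.commute)
  ultimately have "has_pd i f x (f' (axis i 1))"
    unfolding has_pd_def has_field_derivative_def e by (simp add: comp_def)
  then show ?thesis using has_pd_pd by metis
qed

lemma norm_neg2: "norm (- p - q) = norm (p + q)" for p q :: "'a::real_normed_vector"
proof -
  have "- p - q = -(p + q)" by simp
  then show ?thesis by (simp only: norm_minus_cancel)
qed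

lemma norm_axis1: "norm (axis i (1::real) :: real^'n::finite) = 1"
  by (rule norm_axis_1)

lemma schwarz_lim:
  fixes f :: "real^'n::finite \<Rightarrow> real"
  assumes U: "open U" "x \<in> U"
    and fd: "\<And>y. y \<in> U \<Longrightarrow> f differentiable (at y)"
    and gd: "(pd i f) differentiable (at x)"
  shows "((\<lambda>h. (f (x + h *\<^sub>R axis i 1 + h *\<^sub>R axis k 1) - f (x + h *\<^sub>R axis i 1)
               - f (x + h *\<^sub>R axis k 1) + f x) / h^2) \<longlongrightarrow> pd k (pd i f) x) (at 0)"
proof -
  define a :: "real^'n" where "a = axis i 1"
  define b :: "real^'n" where "b = axis k 1"
  have na: "norm a = 1" and nb: "norm b = 1" unfolding a_def b_def by (simp_all add: norm_axis1)
  obtain L where L: "(pd i f has_derivative L) (at x)" using gd unfolding differentiable_def by blast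
  have Lb: "pd k (pd i f) x = L b" unfolding b_def by (rule has_derivative_pd[OF L])
  have lin: "linear L" using has_derivative_linear[OF L] .
  obtain d0 where d0: "d0 > 0" "ball x d0 \<subseteq> U" using U open_contains_ball by blast
  show ?thesis unfolding Lb LIM_eq
  proof (intro allI impI)
    fix r :: real assume r: "r > 0"
    define e where "e = r / 4"
    have e: "e > 0" using r by (simp add: e_def)
    obtain d where d: "d > 0" and dd: "\<And>y. norm (y - x) < d \<Longrightarrow>
        norm (pd i f y - pd i f x - L (y - x)) \<le> e * norm (y - x)"
      using L e unfolding has_derivative_at_alt by blast
    define s where "s = min (d0 / 2) (d / 2)"
    have s: "s > 0" using d d0 by (simp add: s_def)
    show "\<exists>s>0. \<forall>h. h \<noteq> 0 \<and> norm (h - 0) < s \<longrightarrow>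
        norm ((f (x + h *\<^sub>R axis i 1 + h *\<^sub>R axis k 1) - f (x + h *\<^sub>R axis i 1)
               - f (x + h *\<^sub>R axis k 1) + f x) / h^2 - L b) < r"
    proof (intro exI[of _ s] conjI allI impI s)
      fix h :: real assume h: "h \<noteq> 0 \<and> norm (h - 0) < s"
      then have h0: "h \<noteq> 0" and hs: "\<bar>h\<bar> < s" by auto
      define \<phi> where "\<phi> t = f (x + t *\<^sub>R a + h *\<^sub>R b) - f (x + t *\<^sub>R a)" for t
      define \<phi>' where "\<phi>' t = pd i f (x + t *\<^sub>R a + h *\<^sub>R b) - pd i f (x + t *\<^sub>R a)" for t
      have inU: "x + t *\<^sub>R a + c *\<^sub>R b \<in> U" if "\<bar>t\<bar> \<le> \<bar>h\<bar>" "\<bar>c\<bar> \<le> \<bar>h\<bar>" for t c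
      proof -
        have "norm (t *\<^sub>R a + c *\<^sub>R b) \<le> \<bar>t\<bar> + \<bar>c\<bar>"
          using norm_triangle_ineq[of "t *\<^sub>R a" "c *\<^sub>R b"] na nb by simp
        also have "\<dots> < d0" using that hs s_def by linarith
        finally have "x + t *\<^sub>R a + c *\<^sub>R b \<in> ball x d0" by (simp add: dist_norm add.assoc norm_neg2)
        then show ?thesis using d0 by blast
      qed
      have Dphi: "(\<phi> has_real_derivative \<phi>' t) (at t)" if "\<bar>t\<bar> \<le> \<bar>h\<bar>" for t
      proof -
        have "has_pd i f (x + t *\<^sub>R a + c *\<^sub>R b) (pd i f (x + t *\<^sub>R a + c *\<^sub>R b))"
          if "\<bar>c\<bar> \<le> \<bar>h\<bar>" for c
          using differentiable_has_pd fd inU \<open>\<bar>t\<bar> \<le> \<bar>h\<bar>\<close> that by blast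
        then have D: "((\<lambda>s. f (x + t *\<^sub>R a + c *\<^sub>R b + s *\<^sub>R a)) has_real_derivative
              pd i f (x + t *\<^sub>R a + c *\<^sub>R b)) (at 0)" if "\<bar>c\<bar> \<le> \<bar>h\<bar>" for c
          using that unfolding has_pd_def a_def by blast
        have E: "((\<lambda>s. f (x + s *\<^sub>R a + c *\<^sub>R b)) has_real_derivative
              pd i f (x + t *\<^sub>R a + c *\<^sub>R b)) (at t)" if "\<bar>c\<bar> \<le> \<bar>h\<bar>" for c
        proof -
          have "((\<lambda>s. f (x + (s + t) *\<^sub>R a + c *\<^sub>R b)) has_real_derivative
              pd i f (x + t *\<^sub>R a + c *\<^sub>R b)) (at 0)"
            using D[OF that] by (simp add: algebra_simps scaleR_add_left)
          then show ?thesis using DERIV_shift[of "\<lambda>s. f (x + s *\<^sub>R a + c *\<^sub>R b)" _ 0 t]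
            by simp
        qed
        show ?thesis unfolding \<phi>_def \<phi>'_def
          using DERIV_diff[OF E[of h] E[of 0]] by simp
      qed
      obtain c where c: "\<bar>c\<bar> \<le> \<bar>h\<bar>" and mv: "\<phi> h - \<phi> 0 = h * \<phi>' c"
      proof (cases "h > 0")
        case True
        obtain z where "0 < z" "z < h" "\<phi> h - \<phi> 0 = (h - 0) * \<phi>' z"
          using MVT2[of 0 h \<phi> \<phi>'] True Dphi by force
        then show ?thesis using that[of z] by auto
      next
        case False
        then have hn: "h < 0" using h0 by simp
        obtain z where "h < z" "z < 0" "\<phi> 0 - \<phi> h = (0 - h) * \<phi>' z"
          using MVT2[of h 0 \<phi> \<phi>'] hn Dphi by force
        then show ?thesis using that[of z] by (auto simp: algebra_simps)
      qed
      define r1 where "r1 = pd i f (x + c *\<^sub>R a + h *\<^sub>R b) - pd i f x - L (c *\<^sub>R a + h *\<^sub>R b)"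
      define r2 where "r2 = pd i f (x + c *\<^sub>R a) - pd i f x - L (c *\<^sub>R a)"
      have n1: "norm (c *\<^sub>R a + h *\<^sub>R b) \<le> 2 * \<bar>h\<bar>"
        using norm_triangle_ineq[of "c *\<^sub>R a" "h *\<^sub>R b"] na nb c by simp
      have n2: "norm (c *\<^sub>R a) \<le> \<bar>h\<bar>" using na c by simp
      have "\<bar>r1\<bar> \<le> e * norm (c *\<^sub>R a + h *\<^sub>R b)"
        unfolding r1_def using dd[of "x + c *\<^sub>R a + h *\<^sub>R b"] n1 hs s_def
        by (simp add: add.assoc)
      moreover have "e * norm (c *\<^sub>R a + h *\<^sub>R b) \<le> e * (2 * \<bar>h\<bar>)"
        by (rule mult_left_mono[OF n1]) (use e in simp)
      ultimately have r1: "\<bar>r1\<bar> \<le> 2 * e * \<bar>h\<bar>" by simp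
      have "\<bar>r2\<bar> \<le> e * norm (c *\<^sub>R a)"
      proof -
        have "norm (c *\<^sub>R a) < d" using n2 hs s_def by linarith
        then show ?thesis unfolding r2_def using dd[of "x + c *\<^sub>R a"] by simp
      qed
      moreover have "e * norm (c *\<^sub>R a) \<le> e * \<bar>h\<bar>"
        by (rule mult_left_mono[OF n2]) (use e in simp)
      ultimately have r2: "\<bar>r2\<bar> \<le> e * \<bar>h\<bar>" by simp
      have phi': "\<phi>' c = h * L b + r1 - r2"
        unfolding \<phi>'_def r1_def r2_def using linear_add[OF lin] linear_scale[OF lin] by simp
      have Delta: "f (x + h *\<^sub>R axis i 1 + h *\<^sub>R axis k 1) - f (x + h *\<^sub>R axis i 1)
               - f (x + h *\<^sub>R axis k 1) + f x = \<phi> h - \<phi> 0"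
        unfolding \<phi>_def a_def b_def by simp
      have q: "(\<phi> h - \<phi> 0) / h^2 - L b = (r1 - r2) / h"
        using h0 unfolding mv phi' by (simp add: field_simps power2_eq_square)
      have "\<bar>r1 - r2\<bar> \<le> 3 * e * \<bar>h\<bar>" using r1 r2 by arith
      then have "\<bar>r1 - r2\<bar> / \<bar>h\<bar> \<le> 3 * e * \<bar>h\<bar> / \<bar>h\<bar>"
        by (rule divide_right_mono) simp
      then have "\<bar>(r1 - r2) / h\<bar> \<le> 3 * e" using h0 by (simp add: abs_divide)
      show "norm ((f (x + h *\<^sub>R axis i 1 + h *\<^sub>R axis k 1) - f (x + h *\<^sub>R axis i 1)
               - f (x + h *\<^sub>R axis k 1) + f x) / h^2 - L b) < r"
      proof -
        have "\<bar>(r1 - r2) / h\<bar> < r" using \<open>\<bar>(r1 - r2) / h\<bar> \<le> 3 * e\<close> e_def r by linarith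
        then show ?thesis unfolding Delta q by simp
      qed
    qed
  qed
qed

lemma schwarz:
  fixes f :: "real^'n::finite \<Rightarrow> real"
  assumes U: "open U" "x \<in> U"
    and fd: "\<And>y. y \<in> U \<Longrightarrow> f differentiable (at y)"
    and gi: "(pd i f) differentiable (at x)"
    and gk: "(pd k f) differentiable (at x)"
  shows "pd k (pd i f) x = pd i (pd k f) x"
proof -
  note A = schwarz_lim[OF U fd gi, of k]
  note B = schwarz_lim[OF U fd gk, of i]
  have e: "(\<lambda>h. (f (x + h *\<^sub>R axis k 1 + h *\<^sub>R axis i 1) - f (x + h *\<^sub>R axis k 1)
               - f (x + h *\<^sub>R axis i 1) + f x) / h^2) =
        (\<lambda>h. (f (x + h *\<^sub>R axis i 1 + h *\<^sub>R axis k 1) - f (x + h *\<^sub>R axis i 1)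
               - f (x + h *\<^sub>R axis k 1) + f x) / h^2)"
    by (rule ext) (simp add: algebra_simps)
  show ?thesis using tendsto_unique[OF _ A B[unfolded e]] by simp
qed

definition kd :: "'n \<Rightarrow> 'n \<Rightarrow> real" where "kd a b = (if a = b then 1 else 0)"

lemma sum_kd_left [simp]: "(\<Sum>b\<in>(UNIV::'n::finite set). kd a b * f b) = f a"
proof -
  have "(\<Sum>b\<in>(UNIV::'n set). kd a b * f b) = (\<Sum>b\<in>UNIV. if a = b then f b else 0)"
    by (rule sum.cong) (auto simp: kd_def)
  then show ?thesis by simp
qed

lemma sum_kd_right [simp]: "(\<Sum>b\<in>(UNIV::'n::finite set). f b * kd b a) = f a"
proof -
  have "(\<Sum>b\<in>(UNIV::'n set). f b * kd b a) = (\<Sum>b\<in>UNIV. if b = a then f b else 0)"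
    by (rule sum.cong) (auto simp: kd_def)
  then show ?thesis by simp
qed

lemma pd_matrix_invertible:
  fixes M :: "real^'n::finite^'n"
  assumes pd: "\<And>v. v \<noteq> 0 \<Longrightarrow> (\<Sum>i\<in>UNIV. \<Sum>j\<in>UNIV. v$i * M$i$j * v$j) > 0"
  shows "invertible M"
proof -
  have "\<forall>v. M *v v = 0 \<longrightarrow> v = 0"
  proof (intro allI impI)
    fix v assume Mv: "M *v v = 0"
    have "(\<Sum>i\<in>UNIV. \<Sum>j\<in>UNIV. v$i * M$i$j * v$j) = (\<Sum>i\<in>UNIV. v$i * (M *v v)$i)"
      by (simp add: matrix_vector_mult_def sum_distrib_left mult.assoc)
    also have "\<dots> = 0" using Mv by simp
    finally show "v = 0" using pd by force
  qed
  then show ?thesis using matrix_left_invertible_ker invertible_left_inverse by blast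
qed

lemma matrix_inv_both:
  fixes M :: "real^'n::finite^'n"
  assumes "invertible M"
  shows "M ** matrix_inv M = mat 1" "matrix_inv M ** M = mat 1"
proof -
  have "\<exists>A'. M ** A' = mat 1 \<and> A' ** M = mat 1" using assms unfolding invertible_def .
  then have "M ** matrix_inv M = mat 1 \<and> matrix_inv M ** M = mat 1"
    unfolding matrix_inv_def by (rule someI_ex)
  then show "M ** matrix_inv M = mat 1" "matrix_inv M ** M = mat 1" by auto
qed

lemma matrix_inv_entries:
  fixes M :: "real^'n::finite^'n"
  assumes "invertible M"
  shows "\<And>a c. (\<Sum>b\<in>UNIV. M$a$b * matrix_inv M$b$c) = kd a c"
    and "\<And>a c. (\<Sum>b\<in>UNIV. matrix_inv M$a$b * M$b$c) = kd a c"
  using matrix_inv_both[OF assms]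
  by (auto simp: matrix_matrix_mult_def mat_def vec_eq_iff kd_def)

lemma matrix_inv_cramer:
  fixes M :: "real^'n::finite^'n"
  assumes "invertible M"
  shows "matrix_inv M $ k $ j = det (\<chi> i l. if l = k then axis j 1 $ i else M$i$l) / det M"
proof -
  have d: "det M \<noteq> 0" using assms invertible_det_nz by blast
  have "M *v (matrix_inv M *v axis j 1) = axis j 1"
    using matrix_inv_both[OF assms] by (simp add: matrix_vector_mul_assoc)
  then have "matrix_inv M *v axis j 1 = (\<chi> k. det (\<chi> i l. if l = k then axis j 1 $ i else M$i$l) / det M)"
    using cramer[OF d] by blast
  then have "(matrix_inv M *v axis j 1) $ k = det (\<chi> i l. if l = k then axis j 1 $ i else M$i$l) / det M"
    by simp
  moreover have "(matrix_inv M *v axis j 1) $ k = matrix_inv M $ k $ j"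
    by (simp add: matrix_vector_mult_def axis_def if_distrib cong: if_cong)
  ultimately show ?thesis by simp
qed

lemma det_differentiable:
  fixes F :: "real^'m::finite \<Rightarrow> 'n::finite \<Rightarrow> 'n \<Rightarrow> real"
  assumes "\<And>i j. (\<lambda>y. F y i j) differentiable (at x)"
  shows "(\<lambda>y. det (\<chi> i j. F y i j)) differentiable (at x)"
proof -
  have "(\<lambda>y. \<Sum>p\<in>{p. p permutes (UNIV::'n set)}. of_int (sign p) * (\<Prod>i\<in>UNIV. F y i (p i))) differentiable (at x)"
    by (intro differentiable_sum differentiable_mult differentiable_const differentiable_prod_fin ballI assms)
      (simp add: finite_permutations)
  then show ?thesis unfolding det_def by simp
qed

lemma differentiable_transform_open:
  assumes "f differentiable (at x)" "open U" "x \<in> U" "\<And>y. y \<in> U \<Longrightarrow> f y = h y"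
  shows "h differentiable (at x)"
  using assms has_derivative_transform_within_open unfolding differentiable_def by metis

lemma chol:
  fixes H :: "'n \<Rightarrow> 'n \<Rightarrow> real"
  assumes "finite S"
  shows "(\<forall>i k. H i k = H k i) \<Longrightarrow>
    (\<forall>v. (\<forall>i. i \<notin> S \<longrightarrow> v i = 0) \<longrightarrow> (\<exists>i. v i \<noteq> 0) \<longrightarrow> (\<Sum>i\<in>S. \<Sum>k\<in>S. v i * H i k * v k) > 0) \<Longrightarrow>
    \<exists>w. \<forall>i\<in>S. \<forall>k\<in>S. H i k = (\<Sum>j\<in>S. w j i * w j k)"
  using assms
proof (induct S arbitrary: H rule: finite_induct)
  case empty
  then show ?case by simp
next
  case (insert s S)
  note sym = insert.prems(1) and pos = insert.prems(2)
  define hss where "hss = H s s"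
  have "(\<Sum>i\<in>insert s S. \<Sum>k\<in>insert s S. (if i = s then 1 else 0) * H i k * (if k = s then 1 else 0)) > 0"
    using pos[rule_format, of "\<lambda>i. if i = s then 1 else 0"] by auto
  moreover have "(\<Sum>i\<in>insert s S. \<Sum>k\<in>insert s S. (if i = s then 1 else 0) * H i k * (if k = s then (1::real) else 0)) = H s s"
  proof -
    have inn: "(\<Sum>k\<in>insert s S. (if i = s then 1 else 0) * H i k * (if k = s then (1::real) else 0))
        = (if i = s then H s s else 0)" for i
    proof -
      have "(\<Sum>k\<in>insert s S. (if i = s then 1 else 0) * H i k * (if k = s then (1::real) else 0))
          = (\<Sum>k\<in>insert s S. if k = s then (if i = s then H s s else 0) else 0)"
        by (rule sum.cong) auto
      then show ?thesis using insert.hyps by simp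
    qed
    show ?thesis unfolding inn using insert.hyps by simp
  qed
  ultimately have hpos: "hss > 0" unfolding hss_def by simp
  define H' where "H' i k = H i k - H i s * H s k / hss" for i k
  have sym': "\<forall>i k. H' i k = H' k i" unfolding H'_def using sym by (simp add: mult.commute)
  have pos': "\<forall>v. (\<forall>i. i \<notin> S \<longrightarrow> v i = 0) \<longrightarrow> (\<exists>i. v i \<noteq> 0) \<longrightarrow> (\<Sum>i\<in>S. \<Sum>k\<in>S. v i * H' i k * v k) > 0"
  proof (intro allI impI)
    fix v :: "'n \<Rightarrow> real"
    assume supp: "\<forall>i. i \<notin> S \<longrightarrow> v i = 0" and nz: "\<exists>i. v i \<noteq> 0"
    define B where "B = (\<Sum>k\<in>S. H s k * v k)"
    have B': "(\<Sum>i\<in>S. v i * H i s) = B" unfolding B_def using sym by (simp add: mult.commute)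
    define t where "t = - B / hss"
    define w where "w = v(s := t)"
    have ws: "w s = t" unfolding w_def by simp
    have wS: "\<And>i. i \<in> S \<Longrightarrow> w i = v i" unfolding w_def using insert.hyps by auto
    have wsupp: "\<forall>i. i \<notin> insert s S \<longrightarrow> w i = 0" using supp unfolding w_def by auto
    have wnz: "\<exists>i. w i \<noteq> 0"
    proof -
      obtain i where i: "v i \<noteq> 0" using nz by blast
      then have "i \<in> S" using supp by blast
      then show ?thesis using wS i by metis
    qed
    have Q: "(\<Sum>i\<in>insert s S. \<Sum>k\<in>insert s S. w i * H i k * w k) > 0"
      using pos wsupp wnz by blast
    have inner: "(\<Sum>k\<in>insert s S. w i * H i k * w k) = w i * H i s * t + (\<Sum>k\<in>S. w i * H i k * v k)" for i
      using insert.hyps ws wS by (simp add: sum.insert)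
    have "(\<Sum>i\<in>insert s S. \<Sum>k\<in>insert s S. w i * H i k * w k)
        = (t * H s s * t + (\<Sum>k\<in>S. t * H s k * v k)) + (\<Sum>i\<in>S. v i * H i s * t + (\<Sum>k\<in>S. v i * H i k * v k))"
      using insert.hyps by (simp add: inner ws wS)
    also have "\<dots> = t * hss * t + t * B + B * t + (\<Sum>i\<in>S. \<Sum>k\<in>S. v i * H i k * v k)"
    proof -
      have h1: "(\<Sum>k\<in>S. t * H s k * v k) = t * B" unfolding B_def by (simp add: sum_distrib_left mult.assoc)
      have h2: "(\<Sum>i\<in>S. v i * H i s * t) = B * t" unfolding B'[symmetric] by (simp add: sum_distrib_right)
      show ?thesis by (simp add: sum.distrib h1 h2 hss_def)
    qed
    also have "\<dots> = (\<Sum>i\<in>S. \<Sum>k\<in>S. v i * H i k * v k) - B * B / hss"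
      unfolding t_def using hpos by (simp add: field_simps)
    also have "\<dots> = (\<Sum>i\<in>S. \<Sum>k\<in>S. v i * H' i k * v k)"
    proof -
      have "(\<Sum>i\<in>S. \<Sum>k\<in>S. v i * H' i k * v k) = (\<Sum>i\<in>S. \<Sum>k\<in>S. v i * H i k * v k)
          - (\<Sum>i\<in>S. \<Sum>k\<in>S. (v i * H i s) * (H s k * v k) / hss)"
      proof -
        have "\<And>i k. v i * H' i k * v k = v i * H i k * v k - (v i * H i s) * (H s k * v k) / hss"
          unfolding H'_def using hpos by (simp add: field_simps)
        then show ?thesis by (simp add: sum_subtractf)
      qed
      also have "(\<Sum>i\<in>S. \<Sum>k\<in>S. (v i * H i s) * (H s k * v k) / hss) = B * B / hss"
      proof -
        have "(\<Sum>i\<in>S. v i * H i s) * (\<Sum>k\<in>S. H s k * v k) = (\<Sum>i\<in>S. \<Sum>k\<in>S. (v i * H i s) * (H s k * v k))"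
          by (rule sum_product)
        then have "B * B = (\<Sum>i\<in>S. \<Sum>k\<in>S. (v i * H i s) * (H s k * v k))"
          using B' unfolding B_def by simp
        then show ?thesis by (simp add: sum_divide_distrib)
      qed
      finally show ?thesis by simp
    qed
    finally show "(\<Sum>i\<in>S. \<Sum>k\<in>S. v i * H' i k * v k) > 0" using Q by simp
  qed
  obtain w' where w': "\<forall>i\<in>S. \<forall>k\<in>S. H' i k = (\<Sum>j\<in>S. w' j i * w' j k)"
    using insert.hyps(3)[OF sym' pos'] by blast
  define W where "W j i = (if j = s then H s i / sqrt hss else if i = s then 0 else w' j i)" for j i
  have sq: "sqrt hss * sqrt hss = hss" using hpos by simp
  have Ws: "W s i * W s k = H s i * H s k / hss" for i k
  proof -
    have "W s i * W s k = H s i * H s k / (sqrt hss * sqrt hss)" unfolding W_def by simp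
    then show ?thesis using sq by simp
  qed
  show ?case
  proof (intro exI[of _ W] ballI)
    fix i k assume i: "i \<in> insert s S" and k: "k \<in> insert s S"
    have split: "(\<Sum>j\<in>insert s S. W j i * W j k) = H s i * H s k / hss + (\<Sum>j\<in>S. W j i * W j k)"
      using insert.hyps by (simp add: Ws)
    show "H i k = (\<Sum>j\<in>insert s S. W j i * W j k)"
    proof (cases "i = s \<or> k = s")
      case True
      have "(\<Sum>j\<in>S. W j i * W j k) = 0"
        using True insert.hyps by (auto simp: W_def intro!: sum.neutral)
      then show ?thesis unfolding split using True hpos sym unfolding hss_def by auto
    next
      case False
      then have iS: "i \<in> S" and kS: "k \<in> S" using i k by auto
      have "(\<Sum>j\<in>S. W j i * W j k) = (\<Sum>j\<in>S. w' j i * w' j k)"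
        using False insert.hyps by (intro sum.cong) (auto simp: W_def)
      also have "\<dots> = H' i k" using w' iS kS by simp
      finally show ?thesis unfolding split H'_def using sym[rule_format, of i s] by simp
    qed
  qed
qed

lemma tr_zero:
  fixes G H A :: "'n::finite \<Rightarrow> 'n \<Rightarrow> real"
  assumes Gpos: "\<And>v. (\<exists>i. v i \<noteq> 0) \<Longrightarrow> (\<Sum>i\<in>UNIV. \<Sum>k\<in>UNIV. v i * G i k * v k) > 0"
    and Hsym: "\<And>i k. H i k = H k i"
    and Hpos: "\<And>v. (\<exists>i. v i \<noteq> 0) \<Longrightarrow> (\<Sum>i\<in>UNIV. \<Sum>k\<in>UNIV. v i * H i k * v k) > 0"
    and Z: "(\<Sum>i\<in>UNIV. \<Sum>k\<in>UNIV. G i k * (\<Sum>a\<in>UNIV. A k a * (\<Sum>b\<in>UNIV. H a b * A i b))) = 0"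
  shows "A k a = 0"
proof -
  have "\<exists>w. \<forall>a\<in>(UNIV::'n set). \<forall>b\<in>UNIV. H a b = (\<Sum>j\<in>(UNIV::'n set). w j a * w j b)"
    proof (rule chol)
    show "finite (UNIV::'n set)" by simp
  qed (use Hsym Hpos in auto)
  then obtain w where w: "\<forall>a\<in>UNIV. \<forall>b\<in>UNIV. H a b = (\<Sum>j\<in>(UNIV::'n set). w j a * w j b)"
    by blast
  define u where "u j k = (\<Sum>a\<in>UNIV. A k a * w j a)" for j k
  have e1: "(\<Sum>a\<in>UNIV. A k a * (\<Sum>b\<in>UNIV. H a b * A i b)) = (\<Sum>j\<in>UNIV. u j k * u j i)" for k i
  proof -
    have "(\<Sum>a\<in>UNIV. A k a * (\<Sum>b\<in>UNIV. H a b * A i b))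
        = (\<Sum>a\<in>UNIV. \<Sum>b\<in>UNIV. \<Sum>j\<in>UNIV. (A k a * w j a) * (A i b * w j b))"
    proof (rule sum.cong[OF refl])
      fix a
      have "A k a * (\<Sum>b\<in>UNIV. H a b * A i b) = (\<Sum>b\<in>UNIV. A k a * (H a b * A i b))"
        by (simp add: sum_distrib_left)
      also have "\<dots> = (\<Sum>b\<in>UNIV. \<Sum>j\<in>UNIV. (A k a * w j a) * (A i b * w j b))"
      proof (rule sum.cong[OF refl])
        fix b
        have "A k a * (H a b * A i b) = (A k a * A i b) * H a b" by simp
        also have "\<dots> = (A k a * A i b) * (\<Sum>j\<in>UNIV. w j a * w j b)" using w by simp
        also have "\<dots> = (\<Sum>j\<in>UNIV. (A k a * A i b) * (w j a * w j b))" by (rule sum_distrib_left)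
        also have "\<dots> = (\<Sum>j\<in>UNIV. (A k a * w j a) * (A i b * w j b))"
          by (rule sum.cong[OF refl]) simp
        finally show "A k a * (H a b * A i b) = (\<Sum>j\<in>UNIV. (A k a * w j a) * (A i b * w j b))" .
      qed
      finally show "A k a * (\<Sum>b\<in>UNIV. H a b * A i b) = (\<Sum>b\<in>UNIV. \<Sum>j\<in>UNIV. (A k a * w j a) * (A i b * w j b))" .
    qed
    also have "\<dots> = (\<Sum>a\<in>UNIV. \<Sum>j\<in>UNIV. \<Sum>b\<in>UNIV. (A k a * w j a) * (A i b * w j b))"
      by (rule sum.cong[OF refl]) (rule sum.swap)
    also have "\<dots> = (\<Sum>j\<in>UNIV. \<Sum>a\<in>UNIV. \<Sum>b\<in>UNIV. (A k a * w j a) * (A i b * w j b))"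
      by (rule sum.swap)
    also have "\<dots> = (\<Sum>j\<in>UNIV. u j k * u j i)"
      unfolding u_def by (simp add: sum_product)
    finally show ?thesis .
  qed
  define q where "q j = (\<Sum>i\<in>UNIV. \<Sum>k\<in>UNIV. u j i * G i k * u j k)" for j
  have "(\<Sum>i\<in>UNIV. \<Sum>k\<in>UNIV. G i k * (\<Sum>j\<in>UNIV. u j k * u j i)) = (\<Sum>j\<in>UNIV. q j)"
  proof -
    have "(\<Sum>i\<in>UNIV. \<Sum>k\<in>UNIV. G i k * (\<Sum>j\<in>UNIV. u j k * u j i))
        = (\<Sum>i\<in>UNIV. \<Sum>k\<in>UNIV. \<Sum>j\<in>UNIV. u j i * G i k * u j k)"
      by (simp add: sum_distrib_left mult.commute mult.left_commute)
    also have "\<dots> = (\<Sum>i\<in>UNIV. \<Sum>j\<in>UNIV. \<Sum>k\<in>UNIV. u j i * G i k * u j k)"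
      by (rule sum.cong[OF refl]) (rule sum.swap)
    also have "\<dots> = (\<Sum>j\<in>UNIV. q j)" unfolding q_def by (rule sum.swap)
    finally show ?thesis .
  qed
  then have sq0: "(\<Sum>j\<in>UNIV. q j) = 0" using Z e1 by simp
  have qnn: "q j \<ge> 0" for j
  proof (cases "\<exists>i. u j i \<noteq> 0")
    case True then show ?thesis using Gpos[of "u j"] unfolding q_def by simp
  next
    case False then show ?thesis unfolding q_def by simp
  qed
  have "q j = 0" for j using sq0 qnn sum_nonneg_eq_0_iff[of UNIV q] by simp
  then have u0: "u j i = 0" for j i using Gpos[of "u j"] unfolding q_def by force
  have "(\<Sum>a\<in>UNIV. \<Sum>b\<in>UNIV. A k a * H a b * A k b) = (\<Sum>a\<in>UNIV. A k a * (\<Sum>b\<in>UNIV. H a b * A k b))"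
    by (simp add: sum_distrib_left mult.assoc)
  also have "\<dots> = 0" unfolding e1 using u0 by simp
  finally show ?thesis using Hpos[of "A k"] by force
qed

lemma smooth_diff0: "smooth_on U f \<Longrightarrow> open U \<Longrightarrow> x \<in> U \<Longrightarrow> f differentiable (at x)"
  unfolding smooth_on_def using differentiable_on_eq_differentiable_at
  by (metis pds.simps(1))

lemma smooth_diff1: "smooth_on U f \<Longrightarrow> open U \<Longrightarrow> x \<in> U \<Longrightarrow> (pd i f) differentiable (at x)"
  unfolding smooth_on_def using differentiable_on_eq_differentiable_at
  by (metis pds.simps)

locale rmet =
  fixes U :: "(real^'n::finite) set" and g :: "real^'n \<Rightarrow> 'n \<Rightarrow> 'n \<Rightarrow> real"
  assumes rm: "riemannian_metric U g"
begin

lemma openU: "open U" using rm unfolding riemannian_metric_def by simp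

lemma gsym: "x \<in> U \<Longrightarrow> g x i j = g x j i" using rm unfolding riemannian_metric_def by simp

lemma g_diff: "x \<in> U \<Longrightarrow> (\<lambda>y. g y i j) differentiable (at x)"
  using rm smooth_diff0 openU unfolding riemannian_metric_def by blast

lemma dg_diff: "x \<in> U \<Longrightarrow> (pd k (\<lambda>y. g y i j)) differentiable (at x)"
  using rm smooth_diff1 openU unfolding riemannian_metric_def by blast

lemma pdg_sym: "x \<in> U \<Longrightarrow> pd k (\<lambda>y. g y i j) x = pd k (\<lambda>y. g y j i) x"
  by (rule pd_transform[OF openU]) (auto simp: gsym)

lemma gpos: "x \<in> U \<Longrightarrow> (\<exists>i. v i \<noteq> 0) \<Longrightarrow> (\<Sum>i\<in>UNIV. \<Sum>k\<in>UNIV. v i * g x i k * v k) > 0"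
proof -
  assume x: "x \<in> U" and v: "\<exists>i. v i \<noteq> 0"
  have "vec_lambda v \<noteq> (0::real^'n)" using v by (auto simp: vec_eq_iff)
  then have "(\<Sum>i\<in>UNIV. \<Sum>j\<in>UNIV. (vec_lambda v)$i * g x i j * (vec_lambda v)$j) > 0"
    using rm x unfolding riemannian_metric_def by blast
  then show ?thesis by simp
qed

definition Mx :: "real^'n \<Rightarrow> real^'n^'n" where "Mx y = (\<chi> a b. g y a b)"

lemma Mx_nth [simp]: "Mx y $ i $ l = g y i l" by (simp add: Mx_def)

lemma M_inv: "x \<in> U \<Longrightarrow> invertible (Mx x)"
  by (rule pd_matrix_invertible) (use gpos[of x "\<lambda>i. _ $ i"] in \<open>auto simp: Mx_def vec_eq_iff\<close>)

lemma ginv_M: "ginv g x a b = matrix_inv (Mx x) $ a $ b"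
  unfolding ginv_def Mx_def by simp

lemma inv1: "x \<in> U \<Longrightarrow> (\<Sum>b\<in>UNIV. g x a b * ginv g x b c) = kd a c"
  using matrix_inv_entries(1)[OF M_inv] unfolding ginv_M by (simp add: Mx_def)

lemma inv2: "x \<in> U \<Longrightarrow> (\<Sum>b\<in>UNIV. ginv g x a b * g x b c) = kd a c"
  using matrix_inv_entries(2)[OF M_inv] unfolding ginv_M by (simp add: Mx_def)

lemma ginv_sym: "x \<in> U \<Longrightarrow> ginv g x a b = ginv g x b a"
proof -
  assume x: "x \<in> U"
  let ?M = "Mx x" and ?N = "matrix_inv (Mx x)"
  have MT: "transpose ?M = ?M" unfolding Mx_def transpose_def using gsym[OF x] by (simp add: vec_eq_iff)
  have l: "?M ** ?N = mat 1" "?N ** ?M = mat 1" using matrix_inv_both[OF M_inv[OF x]] by auto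
  have "transpose ?N ** ?M = mat 1"
    using arg_cong[OF l(1), of transpose] unfolding matrix_transpose_mul MT by simp
  note T = this
  have "transpose ?N = transpose ?N ** (?M ** ?N)" using l(1) by simp
  also have "\<dots> = (transpose ?N ** ?M) ** ?N" by (rule matrix_mul_assoc)
  also have "\<dots> = ?N" using T by simp
  finally have eq: "transpose ?N = ?N" .
  have "?N $ a $ b = transpose ?N $ a $ b" using eq by simp
  then show ?thesis unfolding ginv_M by (simp add: transpose_def)
qed

lemma ginv_pos: "x \<in> U \<Longrightarrow> (\<exists>i. v i \<noteq> 0) \<Longrightarrow> (\<Sum>i\<in>UNIV. \<Sum>k\<in>UNIV. v i * ginv g x i k * v k) > 0"
proof -
  assume x: "x \<in> U" and v: "\<exists>i. v i \<noteq> 0"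
  define u where "u a = (\<Sum>b\<in>UNIV. ginv g x a b * v b)" for a
  have vu: "v a = (\<Sum>c\<in>UNIV. g x a c * u c)" for a
  proof -
    have "(\<Sum>c\<in>UNIV. g x a c * u c) = (\<Sum>c\<in>UNIV. \<Sum>b\<in>UNIV. g x a c * ginv g x c b * v b)"
      unfolding u_def by (simp add: sum_distrib_left mult.assoc)
    also have "\<dots> = (\<Sum>b\<in>UNIV. \<Sum>c\<in>UNIV. g x a c * ginv g x c b * v b)" by (rule sum.swap)
    also have "\<dots> = (\<Sum>b\<in>UNIV. kd a b * v b)"
      using inv1[OF x] by (simp add: sum_distrib_right[symmetric])
    finally show ?thesis by simp
  qed
  have unz: "\<exists>i. u i \<noteq> 0"
  proof (rule ccontr)
    assume "\<not> (\<exists>i. u i \<noteq> 0)"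
    then have "v a = 0" for a using vu by simp
    then show False using v by simp
  qed
  have "(\<Sum>i\<in>UNIV. \<Sum>k\<in>UNIV. v i * ginv g x i k * v k) = (\<Sum>i\<in>UNIV. v i * u i)"
    unfolding u_def by (simp add: sum_distrib_left mult.assoc)
  also have "\<dots> = (\<Sum>i\<in>UNIV. \<Sum>c\<in>UNIV. u i * g x i c * u c)"
  proof (rule sum.cong[OF refl])
    fix i
    have "v i * u i = u i * (\<Sum>c\<in>UNIV. g x i c * u c)" unfolding vu[of i] by (rule mult.commute)
    also have "\<dots> = (\<Sum>c\<in>UNIV. u i * (g x i c * u c))" by (rule sum_distrib_left)
    finally show "v i * u i = (\<Sum>c\<in>UNIV. u i * g x i c * u c)" by (simp add: mult.assoc)
  qed
  also have "\<dots> > 0" using gpos[OF x unz] .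
  finally show ?thesis .
qed

lemma ginv_diff: "x \<in> U \<Longrightarrow> (\<lambda>y. ginv g y a b) differentiable (at x)"
proof -
  assume x: "x \<in> U"
  have d: "(\<lambda>y. det (\<chi> i l. if l = a then axis b 1 $ i else g y i l) / det (\<chi> i l. g y i l)) differentiable (at x)"
  proof (intro differentiable_divide det_differentiable)
    show "(\<lambda>y. if l = a then axis b 1 $ i else g y i l) differentiable at x" for i l
      by (cases "l = a") (simp_all add: g_diff[OF x])
    show "(\<lambda>y. g y i l) differentiable at x" for i l using g_diff[OF x] .
    show "det (\<chi> i l. g x i l) \<noteq> 0" using M_inv[OF x] invertible_det_nz unfolding Mx_def by blast
  qed
  show ?thesis
  proof (rule differentiable_transform_open[OF d openU x])
    fix y assume y: "y \<in> U"
    show "det (\<chi> i l. if l = a then axis b 1 $ i else g y i l) / det (\<chi> i l. g y i l) = ginv g y a b"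
    proof -
      have c: "ginv g y a b = det (\<chi> i l. if l = a then axis b 1 $ i else Mx y $ i $ l) / det (Mx y)"
        using matrix_inv_cramer[OF M_inv[OF y]] unfolding ginv_M .
      have e1: "(\<chi> i l. if l = a then axis b 1 $ i else Mx y $ i $ l) = (\<chi> i l. if l = a then axis b 1 $ i else g y i l)"
        by (simp cong: if_cong)
      have e2: "Mx y = (\<chi> i l. g y i l)" unfolding Mx_def ..
      show ?thesis using c by (simp add: Mx_def cong: if_cong)
    qed
  qed
qed

end

context rmet
begin

abbreviation Chr where "Chr x k i j \<equiv> christoffel g x k i j"

lemma chr_sym: "x \<in> U \<Longrightarrow> Chr x k i j = Chr x k j i"
proof -
  assume x: "x \<in> U"
  have "\<And>l. pd l (\<lambda>y. g y i j) x = pd l (\<lambda>y. g y j i) x" using pdg_sym[OF x] .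
  then show ?thesis unfolding christoffel_def by (simp add: add.commute)
qed

lemma chr_diff: "x \<in> U \<Longrightarrow> (\<lambda>y. Chr y k i j) differentiable (at x)"
  unfolding christoffel_def
  by (intro differentiable_mult differentiable_sum differentiable_add differentiable_diff
      differentiable_const ginv_diff dg_diff ballI finite) auto

lemma chr_lower: "x \<in> U \<Longrightarrow> (\<Sum>m\<in>UNIV. Chr x m k a * g x m b) =
   1/2 * (pd k (\<lambda>y. g y a b) x + pd a (\<lambda>y. g y k b) x - pd b (\<lambda>y. g y k a) x)"
proof -
  assume x: "x \<in> U"
  define T where "T l = pd k (\<lambda>y. g y a l) x + pd a (\<lambda>y. g y k l) x - pd l (\<lambda>y. g y k a) x" for l
  have C: "Chr x m k a = 1/2 * (\<Sum>l\<in>UNIV. ginv g x m l * T l)" for m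
    unfolding christoffel_def T_def ..
  have "(\<Sum>m\<in>UNIV. Chr x m k a * g x m b) = (\<Sum>m\<in>UNIV. \<Sum>l\<in>UNIV. 1/2 * (ginv g x l m * g x m b) * T l)"
  proof (rule sum.cong[OF refl])
    fix m
    have "Chr x m k a * g x m b = (\<Sum>l\<in>UNIV. 1/2 * (ginv g x m l * T l) * g x m b)"
      unfolding C by (simp add: sum_distrib_left sum_distrib_right mult.assoc)
    also have "\<dots> = (\<Sum>l\<in>UNIV. 1/2 * (ginv g x l m * g x m b) * T l)"
      by (rule sum.cong[OF refl]) (simp add: ginv_sym[OF x, of m] mult.commute mult.left_commute)
    finally show "Chr x m k a * g x m b = (\<Sum>l\<in>UNIV. 1/2 * (ginv g x l m * g x m b) * T l)" .
  qed
  also have "\<dots> = (\<Sum>l\<in>UNIV. \<Sum>m\<in>UNIV. 1/2 * (ginv g x l m * g x m b) * T l)" by (rule sum.swap)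
  also have "\<dots> = (\<Sum>l\<in>UNIV. 1/2 * (\<Sum>m\<in>UNIV. ginv g x l m * g x m b) * T l)"
    by (simp add: sum_distrib_left sum_distrib_right)
  also have "\<dots> = (\<Sum>l\<in>UNIV. 1/2 * T l * kd l b)"
    by (rule sum.cong[OF refl]) (simp add: inv2[OF x])
  also have "\<dots> = 1/2 * T b" by (rule sum_kd_right)
  finally show ?thesis unfolding T_def .
qed

lemma metric_compat: "x \<in> U \<Longrightarrow> pd k (\<lambda>y. g y a b) x =
   (\<Sum>m\<in>UNIV. Chr x m k a * g x m b + Chr x m k b * g x a m)"
proof -
  assume x: "x \<in> U"
  have "(\<Sum>m\<in>UNIV. Chr x m k b * g x a m) = (\<Sum>m\<in>UNIV. Chr x m k b * g x m a)"
    by (rule sum.cong[OF refl]) (simp add: gsym[OF x, of a])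
  then have "(\<Sum>m\<in>UNIV. Chr x m k a * g x m b + Chr x m k b * g x a m)
     = 1/2 * (pd k (\<lambda>y. g y a b) x + pd a (\<lambda>y. g y k b) x - pd b (\<lambda>y. g y k a) x)
     + 1/2 * (pd k (\<lambda>y. g y b a) x + pd b (\<lambda>y. g y k a) x - pd a (\<lambda>y. g y k b) x)"
    by (simp add: sum.distrib chr_lower[OF x])
  also have "\<dots> = pd k (\<lambda>y. g y a b) x" using pdg_sym[OF x, of k b a] by (simp add: field_simps)
  finally show ?thesis by simp
qed

end

locale sol = rmet U g for U :: "(real^'n::finite) set" and g +
  fixes \<xi> :: "real^'n \<Rightarrow> 'n \<Rightarrow> real"
  assumes xi_smooth: "\<And>k. smooth_on U (\<lambda>x. \<xi> x k)"
begin

lemma xi_diff: "x \<in> U \<Longrightarrow> (\<lambda>y. \<xi> y a) differentiable (at x)"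
  using xi_smooth smooth_diff0 openU by blast

lemma dxi_diff: "x \<in> U \<Longrightarrow> (pd k (\<lambda>y. \<xi> y a)) differentiable (at x)"
  using xi_smooth smooth_diff1 openU by blast

abbreviation \<theta> where "\<theta> \<equiv> flat g \<xi>"

definition X where "X x k a = pd k (\<lambda>y. \<xi> y a) x + (\<Sum>m\<in>UNIV. Chr x a k m * \<xi> x m)"

lemma theta_diff: "x \<in> U \<Longrightarrow> (\<lambda>y. \<theta> y a) differentiable (at x)"
  unfolding flat_def
  by (intro differentiable_sum differentiable_mult g_diff xi_diff ballI finite) auto

definition Dth where "Dth x k a = (\<Sum>b\<in>UNIV. pd k (\<lambda>y. g y a b) x * \<xi> x b + g x a b * pd k (\<lambda>y. \<xi> y b) x)"

lemma dflat: "x \<in> U \<Longrightarrow> has_pd k (\<lambda>y. \<theta> y a) x (Dth x k a)"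
  unfolding flat_def Dth_def
  by (intro has_pd_sum_UNIV has_pd_mult differentiable_has_pd g_diff xi_diff)

lemma pd_theta: "x \<in> U \<Longrightarrow> pd k (\<lambda>y. \<theta> y a) x = Dth x k a"
  using dflat has_pd_pd by blast

lemma Dth_diff: "x \<in> U \<Longrightarrow> (\<lambda>y. Dth y k a) differentiable (at x)"
  unfolding Dth_def
  by (intro differentiable_sum differentiable_mult differentiable_add g_diff xi_diff dg_diff dxi_diff ballI finite) auto

lemma cov1_diff: "x \<in> U \<Longrightarrow> (\<lambda>y. cov1 g \<theta> y k a) differentiable (at x)"
proof -
  assume x: "x \<in> U"
  have "(\<lambda>y. Dth y k a - (\<Sum>l\<in>UNIV. Chr y l k a * \<theta> y l)) differentiable (at x)"
    by (intro differentiable_diff differentiable_sum differentiable_mult Dth_diff chr_diff theta_diff x ballI finite)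
  then show ?thesis
    by (rule differentiable_transform_open[OF _ openU x]) (simp add: cov1_def pd_theta)
qed

lemma cov1_X: "x \<in> U \<Longrightarrow> cov1 g \<theta> x k a = (\<Sum>m\<in>UNIV. g x a m * X x k m)"
proof -
  assume x: "x \<in> U"
  define P1 where "P1 = (\<Sum>b\<in>UNIV. \<Sum>m\<in>UNIV. Chr x m k a * g x m b * \<xi> x b)"
  define P2 where "P2 = (\<Sum>b\<in>UNIV. \<Sum>m\<in>UNIV. Chr x m k b * g x a m * \<xi> x b)"
  define P3 where "P3 = (\<Sum>b\<in>UNIV. g x a b * pd k (\<lambda>y. \<xi> y b) x)"
  have D: "Dth x k a = P1 + P2 + P3"
  proof -
    have "Dth x k a = (\<Sum>b\<in>UNIV. (\<Sum>m\<in>UNIV. Chr x m k a * g x m b * \<xi> x b) +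
          (\<Sum>m\<in>UNIV. Chr x m k b * g x a m * \<xi> x b) + g x a b * pd k (\<lambda>y. \<xi> y b) x)"
      unfolding Dth_def metric_compat[OF x]
      by (simp add: sum.distrib sum_distrib_right distrib_right)
    then show ?thesis unfolding P1_def P2_def P3_def by (simp add: sum.distrib)
  qed
  have P1': "P1 = (\<Sum>l\<in>UNIV. Chr x l k a * \<theta> x l)"
  proof -
    have "P1 = (\<Sum>m\<in>UNIV. \<Sum>b\<in>UNIV. Chr x m k a * g x m b * \<xi> x b)" unfolding P1_def by (rule sum.swap)
    also have "\<dots> = (\<Sum>l\<in>UNIV. Chr x l k a * \<theta> x l)"
      unfolding flat_def by (simp add: sum_distrib_left mult.assoc)
    finally show ?thesis .
  qed
  have P2': "P2 = (\<Sum>m\<in>UNIV. g x a m * (\<Sum>b\<in>UNIV. Chr x m k b * \<xi> x b))"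
  proof -
    have "P2 = (\<Sum>m\<in>UNIV. \<Sum>b\<in>UNIV. Chr x m k b * g x a m * \<xi> x b)" unfolding P2_def by (rule sum.swap)
    also have "\<dots> = (\<Sum>m\<in>UNIV. \<Sum>b\<in>UNIV. g x a m * (Chr x m k b * \<xi> x b))"
      by (intro sum.cong refl) simp
    also have "\<dots> = (\<Sum>m\<in>UNIV. g x a m * (\<Sum>b\<in>UNIV. Chr x m k b * \<xi> x b))"
      by (simp add: sum_distrib_left)
    finally show ?thesis .
  qed
  have "cov1 g \<theta> x k a = P2 + P3" unfolding cov1_def pd_theta[OF x] D P1' by simp
  also have "\<dots> = (\<Sum>m\<in>UNIV. g x a m * X x k m)"
    unfolding P2' P3_def X_def by (simp add: sum.distrib distrib_left)
  finally show ?thesis .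
qed

lemma X_cov1: "x \<in> U \<Longrightarrow> X x k a = (\<Sum>b\<in>UNIV. ginv g x a b * cov1 g \<theta> x k b)"
proof -
  assume x: "x \<in> U"
  have "(\<Sum>b\<in>UNIV. ginv g x a b * cov1 g \<theta> x k b) = (\<Sum>b\<in>UNIV. \<Sum>m\<in>UNIV. ginv g x a b * g x b m * X x k m)"
    unfolding cov1_X[OF x] by (simp add: sum_distrib_left mult.assoc)
  also have "\<dots> = (\<Sum>m\<in>UNIV. \<Sum>b\<in>UNIV. ginv g x a b * g x b m * X x k m)" by (rule sum.swap)
  also have "\<dots> = (\<Sum>m\<in>UNIV. kd a m * X x k m)"
    by (simp add: sum_distrib_right[symmetric] inv2[OF x])
  finally show ?thesis by simp
qed

end

context sol
begin

lemma pd_const_on: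
  assumes "x \<in> U" "\<And>y. y \<in> U \<Longrightarrow> f y = c"
  shows "pd k f x = 0"
proof -
  have "pd k f x = pd k (\<lambda>y. c) x" by (rule pd_transform[OF openU assms(1)]) (simp add: assms(2))
  also have "\<dots> = 0" using has_pd_const has_pd_pd by blast
  finally show ?thesis .
qed

lemma theta_xi: "(\<Sum>a\<in>UNIV. \<theta> y a * \<xi> y a) = (\<Sum>i\<in>UNIV. \<Sum>j\<in>UNIV. g y i j * \<xi> y i * \<xi> y j)"
  unfolding flat_def sum_distrib_right by (intro sum.cong refl) (simp add: mult_ac)

lemma theta_X: "x \<in> U \<Longrightarrow> (\<Sum>a\<in>UNIV. \<theta> x a * X x k a) = (\<Sum>a\<in>UNIV. cov1 g \<theta> x k a * \<xi> x a)"
proof -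
  assume x: "x \<in> U"
  have "(\<Sum>a\<in>UNIV. \<theta> x a * X x k a) = (\<Sum>a\<in>UNIV. \<Sum>b\<in>UNIV. g x b a * X x k a * \<xi> x b)"
  proof -
    have e: "\<And>a b. g x a b * \<xi> x b * X x k a = g x b a * X x k a * \<xi> x b"
      using gsym[OF x] by (simp add: mult_ac)
    show ?thesis by (simp only: flat_def sum_distrib_right e)
  qed
  also have "\<dots> = (\<Sum>b\<in>UNIV. \<Sum>a\<in>UNIV. g x b a * X x k a * \<xi> x b)" by (rule sum.swap)
  also have "\<dots> = (\<Sum>b\<in>UNIV. cov1 g \<theta> x k b * \<xi> x b)"
    unfolding cov1_X[OF x] by (simp add: sum_distrib_right)
  finally show ?thesis .
qed

lemma gamma_cancel: "(\<Sum>a\<in>UNIV. (\<Sum>l\<in>UNIV. Chr x l k a * \<theta> x l) * \<xi> x a)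
    = (\<Sum>a\<in>UNIV. \<theta> x a * (\<Sum>m\<in>UNIV. Chr x a k m * \<xi> x m))"
proof -
  have "(\<Sum>a\<in>UNIV. (\<Sum>l\<in>UNIV. Chr x l k a * \<theta> x l) * \<xi> x a)
      = (\<Sum>a\<in>UNIV. \<Sum>l\<in>UNIV. \<theta> x l * (Chr x l k a * \<xi> x a))"
    unfolding sum_distrib_right by (intro sum.cong refl) (simp add: mult_ac)
  also have "\<dots> = (\<Sum>l\<in>UNIV. \<Sum>a\<in>UNIV. \<theta> x l * (Chr x l k a * \<xi> x a))" by (rule sum.swap)
  also have "\<dots> = (\<Sum>a\<in>UNIV. \<theta> x a * (\<Sum>m\<in>UNIV. Chr x a k m * \<xi> x m))"
    by (simp add: sum_distrib_left)
  finally show ?thesis .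
qed

lemma Y0:
  assumes cl: "\<forall>y\<in>U. (\<Sum>i\<in>UNIV. \<Sum>j\<in>UNIV. g y i j * \<xi> y i * \<xi> y j) = c" and x: "x \<in> U"
  shows "(\<Sum>a\<in>UNIV. cov1 g \<theta> x k a * \<xi> x a) = 0"
proof -
  let ?F = "\<lambda>y. \<Sum>a\<in>UNIV. \<theta> y a * \<xi> y a"
  have hp: "has_pd k ?F x (\<Sum>a\<in>UNIV. Dth x k a * \<xi> x a + \<theta> x a * pd k (\<lambda>y. \<xi> y a) x)"
    by (intro has_pd_sum_UNIV has_pd_mult dflat[OF x] differentiable_has_pd xi_diff[OF x])
  have "pd k ?F x = 0" by (rule pd_const_on[OF x]) (use cl theta_xi in auto)
  then have z: "(\<Sum>a\<in>UNIV. Dth x k a * \<xi> x a + \<theta> x a * pd k (\<lambda>y. \<xi> y a) x) = 0"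
    using has_pd_pd[OF hp] by simp
  have Dth: "Dth x k a = cov1 g \<theta> x k a + (\<Sum>l\<in>UNIV. Chr x l k a * \<theta> x l)" for a
    unfolding cov1_def pd_theta[OF x] by simp
  have Dxi: "pd k (\<lambda>y. \<xi> y a) x = X x k a - (\<Sum>m\<in>UNIV. Chr x a k m * \<xi> x m)" for a
    unfolding X_def by simp
  have "(\<Sum>a\<in>UNIV. Dth x k a * \<xi> x a + \<theta> x a * pd k (\<lambda>y. \<xi> y a) x)
     = (\<Sum>a\<in>UNIV. cov1 g \<theta> x k a * \<xi> x a) + (\<Sum>a\<in>UNIV. (\<Sum>l\<in>UNIV. Chr x l k a * \<theta> x l) * \<xi> x a)
       + (\<Sum>a\<in>UNIV. \<theta> x a * X x k a) - (\<Sum>a\<in>UNIV. \<theta> x a * (\<Sum>m\<in>UNIV. Chr x a k m * \<xi> x m))"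
    unfolding Dth Dxi by (simp add: sum.distrib sum_subtractf distrib_right right_diff_distrib)
  also have "\<dots> = 2 * (\<Sum>a\<in>UNIV. cov1 g \<theta> x k a * \<xi> x a)"
    unfolding theta_X[OF x] gamma_cancel by simp
  finally show ?thesis using z by simp
qed

end

context sol
begin

lemma N0:
  assumes cl: "\<forall>y\<in>U. (\<Sum>i\<in>UNIV. \<Sum>j\<in>UNIV. g y i j * \<xi> y i * \<xi> y j) = c" and x: "x \<in> U"
  shows "(\<Sum>a\<in>UNIV. cov2 g \<theta> x i k a * \<xi> x a) + (\<Sum>a\<in>UNIV. cov1 g \<theta> x k a * X x i a) = 0"
proof -
  let ?Y = "\<lambda>y. \<Sum>a\<in>UNIV. cov1 g \<theta> y k a * \<xi> y a"
  define Dc where "Dc a = pd i (\<lambda>y. cov1 g \<theta> y k a) x" for a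
  have hp: "has_pd i ?Y x (\<Sum>a\<in>UNIV. Dc a * \<xi> x a + cov1 g \<theta> x k a * pd i (\<lambda>y. \<xi> y a) x)"
    unfolding Dc_def
    by (intro has_pd_sum_UNIV has_pd_mult differentiable_has_pd xi_diff[OF x] cov1_diff[OF x])
  have "pd i ?Y x = 0" by (rule pd_const_on[OF x]) (use Y0[OF cl] in auto)
  then have z: "(\<Sum>a\<in>UNIV. Dc a * \<xi> x a + cov1 g \<theta> x k a * pd i (\<lambda>y. \<xi> y a) x) = 0"
    using has_pd_pd[OF hp] by simp
  define G where "G = (\<Sum>a\<in>UNIV. \<Sum>m\<in>UNIV. cov1 g \<theta> x k a * Chr x a i m * \<xi> x m)"
  have c2: "cov2 g \<theta> x i k a = Dc a - (\<Sum>l\<in>UNIV. Chr x l i k * cov1 g \<theta> x l a)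
       - (\<Sum>l\<in>UNIV. Chr x l i a * cov1 g \<theta> x k l)" for a
    unfolding cov2_def Dc_def by (simp add: sum.distrib)
  have s1: "(\<Sum>a\<in>UNIV. (\<Sum>l\<in>UNIV. Chr x l i k * cov1 g \<theta> x l a) * \<xi> x a) = 0"
  proof -
    have "(\<Sum>a\<in>UNIV. (\<Sum>l\<in>UNIV. Chr x l i k * cov1 g \<theta> x l a) * \<xi> x a)
        = (\<Sum>a\<in>UNIV. \<Sum>l\<in>UNIV. Chr x l i k * (cov1 g \<theta> x l a * \<xi> x a))"
      unfolding sum_distrib_right by (intro sum.cong refl) (simp add: mult_ac)
    also have "\<dots> = (\<Sum>l\<in>UNIV. \<Sum>a\<in>UNIV. Chr x l i k * (cov1 g \<theta> x l a * \<xi> x a))" by (rule sum.swap)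
    also have "\<dots> = (\<Sum>l\<in>UNIV. Chr x l i k * (\<Sum>a\<in>UNIV. cov1 g \<theta> x l a * \<xi> x a))"
      by (simp add: sum_distrib_left)
    also have "\<dots> = 0" using Y0[OF cl x] by simp
    finally show ?thesis .
  qed
  have s2: "(\<Sum>a\<in>UNIV. (\<Sum>l\<in>UNIV. Chr x l i a * cov1 g \<theta> x k l) * \<xi> x a) = G"
  proof -
    have "(\<Sum>a\<in>UNIV. (\<Sum>l\<in>UNIV. Chr x l i a * cov1 g \<theta> x k l) * \<xi> x a)
        = (\<Sum>a\<in>UNIV. \<Sum>l\<in>UNIV. cov1 g \<theta> x k l * Chr x l i a * \<xi> x a)"
      unfolding sum_distrib_right by (intro sum.cong refl) (simp add: mult_ac)
    also have "\<dots> = G" unfolding G_def by (rule sum.swap)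
    finally show ?thesis .
  qed
  have s3: "(\<Sum>a\<in>UNIV. cov1 g \<theta> x k a * X x i a)
      = (\<Sum>a\<in>UNIV. cov1 g \<theta> x k a * pd i (\<lambda>y. \<xi> y a) x) + G"
    unfolding X_def G_def by (simp add: distrib_left sum.distrib sum_distrib_left mult.assoc)
  have "(\<Sum>a\<in>UNIV. cov2 g \<theta> x i k a * \<xi> x a)
      = (\<Sum>a\<in>UNIV. Dc a * \<xi> x a) - (\<Sum>a\<in>UNIV. (\<Sum>l\<in>UNIV. Chr x l i k * cov1 g \<theta> x l a) * \<xi> x a)
        - (\<Sum>a\<in>UNIV. (\<Sum>l\<in>UNIV. Chr x l i a * cov1 g \<theta> x k l) * \<xi> x a)"
    unfolding c2 by (simp add: left_diff_distrib sum_subtractf)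
  also have "\<dots> = (\<Sum>a\<in>UNIV. Dc a * \<xi> x a) - G" unfolding s1 s2 by simp
  finally show ?thesis using z s3 by (simp add: sum.distrib)
qed

lemma trace0:
  assumes cl: "\<forall>y\<in>U. (\<Sum>i\<in>UNIV. \<Sum>j\<in>UNIV. g y i j * \<xi> y i * \<xi> y j) = c" and x: "x \<in> U"
    and lap: "\<And>j. laplace g \<theta> x j = 0"
  shows "(\<Sum>i\<in>UNIV. \<Sum>k\<in>UNIV. ginv g x i k * (\<Sum>a\<in>UNIV. cov1 g \<theta> x k a *
            (\<Sum>b\<in>UNIV. ginv g x a b * cov1 g \<theta> x i b))) = 0"
proof -
  have e: "(\<Sum>a\<in>UNIV. cov1 g \<theta> x k a * (\<Sum>b\<in>UNIV. ginv g x a b * cov1 g \<theta> x i b))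
      = - (\<Sum>a\<in>UNIV. cov2 g \<theta> x i k a * \<xi> x a)" for i k
    using N0[OF cl x, of i k] unfolding X_cov1[OF x] by simp
  have "(\<Sum>i\<in>UNIV. \<Sum>k\<in>UNIV. ginv g x i k * (\<Sum>a\<in>UNIV. cov2 g \<theta> x i k a * \<xi> x a))
      = (\<Sum>i\<in>UNIV. \<Sum>k\<in>UNIV. \<Sum>a\<in>UNIV. ginv g x i k * cov2 g \<theta> x i k a * \<xi> x a)"
    by (simp add: sum_distrib_left mult.assoc)
  also have "\<dots> = (\<Sum>i\<in>UNIV. \<Sum>a\<in>UNIV. \<Sum>k\<in>UNIV. ginv g x i k * cov2 g \<theta> x i k a * \<xi> x a)"
    by (intro sum.cong refl sum.swap)
  also have "\<dots> = (\<Sum>a\<in>UNIV. \<Sum>i\<in>UNIV. \<Sum>k\<in>UNIV. ginv g x i k * cov2 g \<theta> x i k a * \<xi> x a)"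
    by (rule sum.swap)
  also have "\<dots> = (\<Sum>a\<in>UNIV. laplace g \<theta> x a * \<xi> x a)"
    unfolding laplace_def by (simp add: sum_distrib_right)
  also have "\<dots> = 0" using lap by simp
  finally show ?thesis unfolding e by (simp add: sum_negf)
qed

lemma cov1_zero:
  assumes cl: "\<forall>y\<in>U. (\<Sum>i\<in>UNIV. \<Sum>j\<in>UNIV. g y i j * \<xi> y i * \<xi> y j) = c" and x: "x \<in> U"
    and lap: "\<And>j. laplace g \<theta> x j = 0"
  shows "cov1 g \<theta> x k a = 0"
  by (rule tr_zero[where G="ginv g x" and H="ginv g x", OF ginv_pos[OF x] ginv_sym[OF x] ginv_pos[OF x]
        trace0[OF cl x lap]])

lemma Dxi:
  assumes cl: "\<forall>y\<in>U. (\<Sum>i\<in>UNIV. \<Sum>j\<in>UNIV. g y i j * \<xi> y i * \<xi> y j) = c" and x: "x \<in> U"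
    and lap: "\<And>j. laplace g \<theta> x j = 0"
  shows "pd k (\<lambda>y. \<xi> y a) x = - (\<Sum>m\<in>UNIV. Chr x a k m * \<xi> x m)"
proof -
  have "X x k a = 0" unfolding X_cov1[OF x] using cov1_zero[OF cl x lap] by simp
  then show ?thesis unfolding X_def by simp
qed

end

context sol
begin

lemma lie0:
  assumes cl: "\<forall>y\<in>U. (\<Sum>i\<in>UNIV. \<Sum>j\<in>UNIV. g y i j * \<xi> y i * \<xi> y j) = c" and x: "x \<in> U"
    and lap: "\<And>j. laplace g \<theta> x j = 0"
  shows "lie_metric g \<xi> x i j = 0"
proof -
  note D = Dxi[OF cl x lap]
  define A1 where "A1 = (\<Sum>k\<in>UNIV. \<Sum>m\<in>UNIV. \<xi> x k * Chr x m k i * g x m j)"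
  define A2 where "A2 = (\<Sum>k\<in>UNIV. \<Sum>m\<in>UNIV. \<xi> x k * Chr x m k j * g x i m)"
  have a: "(\<Sum>k\<in>UNIV. \<xi> x k * pd k (\<lambda>y. g y i j) x) = A1 + A2"
    unfolding metric_compat[OF x] A1_def A2_def
    by (simp add: sum_distrib_left distrib_left sum.distrib mult.assoc)
  have b1: "(\<Sum>k\<in>UNIV. g x k j * pd i (\<lambda>y. \<xi> y k) x) = - A1"
  proof -
    have "(\<Sum>k\<in>UNIV. g x k j * pd i (\<lambda>y. \<xi> y k) x) = - (\<Sum>k\<in>UNIV. \<Sum>m\<in>UNIV. g x k j * Chr x k i m * \<xi> x m)"
      unfolding D by (simp add: sum_distrib_left sum_negf mult.assoc)
    also have "(\<Sum>k\<in>UNIV. \<Sum>m\<in>UNIV. g x k j * Chr x k i m * \<xi> x m) = (\<Sum>m\<in>UNIV. \<Sum>k\<in>UNIV. g x k j * Chr x k i m * \<xi> x m)"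
      by (rule sum.swap)
    also have "\<dots> = A1" unfolding A1_def
      by (intro sum.cong refl) (simp add: chr_sym[OF x, of _ i] mult_ac)
    finally show ?thesis .
  qed
  have b2: "(\<Sum>k\<in>UNIV. g x i k * pd j (\<lambda>y. \<xi> y k) x) = - A2"
  proof -
    have "(\<Sum>k\<in>UNIV. g x i k * pd j (\<lambda>y. \<xi> y k) x) = - (\<Sum>k\<in>UNIV. \<Sum>m\<in>UNIV. g x i k * Chr x k j m * \<xi> x m)"
      unfolding D by (simp add: sum_distrib_left sum_negf mult.assoc)
    also have "(\<Sum>k\<in>UNIV. \<Sum>m\<in>UNIV. g x i k * Chr x k j m * \<xi> x m) = (\<Sum>m\<in>UNIV. \<Sum>k\<in>UNIV. g x i k * Chr x k j m * \<xi> x m)"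
      by (rule sum.swap)
    also have "\<dots> = A2" unfolding A2_def
      by (intro sum.cong refl) (simp add: chr_sym[OF x, of _ j] mult_ac)
    finally show ?thesis .
  qed
  show ?thesis unfolding lie_metric_def sum.distrib a b1 b2 by simp
qed

end

context sol
begin

lemma ric_xi:
  assumes cl: "\<forall>y\<in>U. (\<Sum>i\<in>UNIV. \<Sum>j\<in>UNIV. g y i j * \<xi> y i * \<xi> y j) = c" and x: "x \<in> U"
    and lap: "\<forall>y\<in>U. \<forall>j. laplace g \<theta> y j = 0"
  shows "(\<Sum>p\<in>UNIV. \<xi> x p * ricci g x p i) = 0"
proof -
  define dG where "dG k l i m = pd k (\<lambda>y. Chr y l i m) x" for k l i m
  define E where "E k i l = pd k (pd i (\<lambda>y. \<xi> y l)) x" for k i l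
  have dG_sym: "dG k l i m = dG k l m i" for k l i m
    unfolding dG_def by (rule pd_transform[OF openU x]) (simp add: chr_sym)
  have Dx: "pd k (\<lambda>y. \<xi> y a) y = - (\<Sum>m\<in>UNIV. Chr y a k m * \<xi> y m)" if "y \<in> U" for k a y
    using Dxi[OF cl that] lap that by blast
  have Ef: "E k i l = - (\<Sum>m\<in>UNIV. dG k l i m * \<xi> x m) + (\<Sum>m\<in>UNIV. Chr x l i m * (\<Sum>p\<in>UNIV. Chr x m k p * \<xi> x p))"
    for k i l
  proof -
    have hp: "has_pd k (\<lambda>y. - (\<Sum>m\<in>UNIV. Chr y l i m * \<xi> y m)) x
        (- (\<Sum>m\<in>UNIV. dG k l i m * \<xi> x m + Chr x l i m * pd k (\<lambda>y. \<xi> y m) x))"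
      unfolding dG_def
      by (intro has_pd_minus has_pd_sum_UNIV has_pd_mult differentiable_has_pd chr_diff[OF x] xi_diff[OF x])
    have "has_pd k (pd i (\<lambda>y. \<xi> y l)) x
        (- (\<Sum>m\<in>UNIV. dG k l i m * \<xi> x m + Chr x l i m * pd k (\<lambda>y. \<xi> y m) x))"
      by (rule has_pd_transform[OF hp openU x]) (simp add: Dx)
    then have "E k i l = - (\<Sum>m\<in>UNIV. dG k l i m * \<xi> x m + Chr x l i m * pd k (\<lambda>y. \<xi> y m) x)"
      unfolding E_def by (rule has_pd_pd)
    then show ?thesis unfolding Dx[OF x] by (simp add: sum_subtractf)
  qed
  have Esym: "E k i l = E i k l" for k i l
    unfolding E_def
    by (rule schwarz[OF openU x]) (use xi_diff dxi_diff x in auto)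
  define T1 where "T1 = (\<Sum>k\<in>UNIV. \<Sum>m\<in>UNIV. dG k k i m * \<xi> x m)"
  define T2 where "T2 = (\<Sum>k\<in>UNIV. \<Sum>m\<in>UNIV. dG i k k m * \<xi> x m)"
  define T3 where "T3 = (\<Sum>k\<in>UNIV. \<Sum>m\<in>UNIV. Chr x k k m * (\<Sum>p\<in>UNIV. Chr x m i p * \<xi> x p))"
  define T4 where "T4 = (\<Sum>k\<in>UNIV. \<Sum>m\<in>UNIV. Chr x k i m * (\<Sum>p\<in>UNIV. Chr x m k p * \<xi> x p))"
  have E1: "(\<Sum>k\<in>UNIV. E k i k) = - T1 + T4" unfolding Ef T1_def T4_def by (simp add: sum.distrib sum_negf sum_subtractf)
  have E2: "(\<Sum>k\<in>UNIV. E i k k) = - T2 + T3" unfolding Ef T2_def T3_def by (simp add: sum.distrib sum_negf sum_subtractf)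
  have E12: "(\<Sum>k\<in>UNIV. E k i k) = (\<Sum>k\<in>UNIV. E i k k)" using Esym by simp
  have R1: "(\<Sum>p\<in>UNIV. \<Sum>k\<in>UNIV. \<xi> x p * dG k k p i) = T1"
  proof -
    have "(\<Sum>p\<in>UNIV. \<Sum>k\<in>UNIV. \<xi> x p * dG k k p i) = (\<Sum>k\<in>UNIV. \<Sum>p\<in>UNIV. \<xi> x p * dG k k p i)"
      by (rule sum.swap)
    also have "\<dots> = T1" unfolding T1_def by (intro sum.cong refl) (simp add: dG_sym[of _ _ _ i] mult.commute)
    finally show ?thesis .
  qed
  have R2: "(\<Sum>p\<in>UNIV. \<Sum>k\<in>UNIV. \<xi> x p * dG i k p k) = T2"
  proof -
    have "(\<Sum>p\<in>UNIV. \<Sum>k\<in>UNIV. \<xi> x p * dG i k p k) = (\<Sum>k\<in>UNIV. \<Sum>p\<in>UNIV. \<xi> x p * dG i k p k)"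
      by (rule sum.swap)
    also have "\<dots> = T2" unfolding T2_def by (intro sum.cong refl) (simp add: dG_sym mult.commute)
    finally show ?thesis .
  qed
  have R3: "(\<Sum>p\<in>UNIV. \<Sum>k\<in>UNIV. \<Sum>l\<in>UNIV. \<xi> x p * (Chr x k k l * Chr x l p i)) = T3"
  proof -
    have "(\<Sum>p\<in>UNIV. \<Sum>k\<in>UNIV. \<Sum>l\<in>UNIV. \<xi> x p * (Chr x k k l * Chr x l p i))
        = (\<Sum>k\<in>UNIV. \<Sum>p\<in>UNIV. \<Sum>l\<in>UNIV. \<xi> x p * (Chr x k k l * Chr x l p i))" by (rule sum.swap)
    also have "\<dots> = (\<Sum>k\<in>UNIV. \<Sum>l\<in>UNIV. \<Sum>p\<in>UNIV. \<xi> x p * (Chr x k k l * Chr x l p i))"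
      by (intro sum.cong refl sum.swap)
    also have "\<dots> = T3" unfolding T3_def sum_distrib_left
      by (intro sum.cong refl) (simp add: chr_sym[OF x, of _ _ i] mult_ac)
    finally show ?thesis .
  qed
  have R4: "(\<Sum>p\<in>UNIV. \<Sum>k\<in>UNIV. \<Sum>l\<in>UNIV. \<xi> x p * (Chr x k i l * Chr x l p k)) = T4"
  proof -
    have "(\<Sum>p\<in>UNIV. \<Sum>k\<in>UNIV. \<Sum>l\<in>UNIV. \<xi> x p * (Chr x k i l * Chr x l p k))
        = (\<Sum>k\<in>UNIV. \<Sum>p\<in>UNIV. \<Sum>l\<in>UNIV. \<xi> x p * (Chr x k i l * Chr x l p k))" by (rule sum.swap)
    also have "\<dots> = (\<Sum>k\<in>UNIV. \<Sum>l\<in>UNIV. \<Sum>p\<in>UNIV. \<xi> x p * (Chr x k i l * Chr x l p k))"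
      by (intro sum.cong refl sum.swap)
    also have "\<dots> = T4" unfolding T4_def sum_distrib_left
      by (intro sum.cong refl) (simp add: chr_sym[OF x] mult_ac)
    finally show ?thesis .
  qed
  have "(\<Sum>p\<in>UNIV. \<xi> x p * ricci g x p i)
      = (\<Sum>p\<in>UNIV. \<Sum>k\<in>UNIV. \<xi> x p * dG k k p i) - (\<Sum>p\<in>UNIV. \<Sum>k\<in>UNIV. \<xi> x p * dG i k p k)
        + (\<Sum>p\<in>UNIV. \<Sum>k\<in>UNIV. \<Sum>l\<in>UNIV. \<xi> x p * (Chr x k k l * Chr x l p i))
        - (\<Sum>p\<in>UNIV. \<Sum>k\<in>UNIV. \<Sum>l\<in>UNIV. \<xi> x p * (Chr x k i l * Chr x l p k))"
    unfolding ricci_def dG_def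
    by (simp add: sum_distrib_left distrib_left right_diff_distrib sum.distrib sum_subtractf)
  also have "\<dots> = T1 - T2 + T3 - T4" unfolding R1 R2 R3 R4 ..
  also have "\<dots> = 0" using E1 E2 E12 by simp
  finally show ?thesis .
qed

end

theorem theorem3p19:
  fixes U :: "(real^'n::finite) set"
    and g :: "real^'n \<Rightarrow> 'n \<Rightarrow> 'n \<Rightarrow> real"
    and \<xi> :: "real^'n \<Rightarrow> 'n \<Rightarrow> real"
    and \<gamma> :: real
  assumes "CARD('n) \<ge> 3"
    and "U \<noteq> {}"
    and "ricci_soliton U g \<xi> \<gamma>"
    and "\<exists>c>0. \<forall>x\<in>U. (\<Sum>i\<in>UNIV. \<Sum>j\<in>UNIV. g x i j * \<xi> x i * \<xi> x j) = c"
    and "\<forall>x\<in>U. \<forall>j. laplace g (flat g \<xi>) x j = 0"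
  shows "\<gamma> = 0"
proof -
  have rm: "riemannian_metric U g" and sm: "\<And>k. smooth_on U (\<lambda>x. \<xi> x k)"
    and se: "\<forall>x\<in>U. \<forall>i j. 1/2 * lie_metric g \<xi> x i j + ricci g x i j = \<gamma> * g x i j"
    using assms(3) unfolding ricci_soliton_def by auto
  interpret sol U g \<xi>
    by (rule sol.intro[OF rmet.intro[OF rm]]) (rule sol_axioms.intro[OF sm])
  obtain c where c: "c > 0" and cl: "\<forall>y\<in>U. (\<Sum>i\<in>UNIV. \<Sum>j\<in>UNIV. g y i j * \<xi> y i * \<xi> y j) = c"
    using assms(4) by blast
  obtain x where x: "x \<in> U" using assms(2) by blast
  have lapx: "\<And>j. laplace g (flat g \<xi>) x j = 0" using assms(5) x by blast
  have ric: "ricci g x p i = \<gamma> * g x p i" for p i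
  proof -
    have "1/2 * lie_metric g \<xi> x p i + ricci g x p i = \<gamma> * g x p i" using se x by blast
    then show ?thesis using lie0[OF cl x lapx, of p i] by simp
  qed
  have z: "(\<Sum>p\<in>UNIV. \<xi> x p * (\<gamma> * g x p i)) = 0" for i
    using ric_xi[OF cl x assms(5), of i] unfolding ric .
  have "0 = (\<Sum>i\<in>UNIV. \<xi> x i * (\<Sum>p\<in>UNIV. \<xi> x p * (\<gamma> * g x p i)))" using z by simp
  also have "\<dots> = \<gamma> * (\<Sum>i\<in>UNIV. \<Sum>p\<in>UNIV. g x p i * \<xi> x p * \<xi> x i)"
    by (simp add: sum_distrib_left mult_ac)
  also have "(\<Sum>i\<in>UNIV. \<Sum>p\<in>UNIV. g x p i * \<xi> x p * \<xi> x i) = (\<Sum>p\<in>UNIV. \<Sum>i\<in>UNIV. g x p i * \<xi> x p * \<xi> x i)"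
    by (rule sum.swap)
  also have "\<dots> = c" using cl x by simp
  finally have "\<gamma> * c = 0" by simp
  then show ?thesis using c by simp
qed

end
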